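(* Let $A$ be a totally unimodular $n\times m$ matrix, let $L(A) := \{v\in\mathbb{Z}^m : Av = 0\}$ and $\lambda := \lambda(L(A))$. Then every nonzero vector $v \in L(A)$ with $\lVert v\rVert_1 < 2\lambda$ is a circuit of $A$.
   Context: A matrix is totally unimodular if every square submatrix has determinant $0$ or $\pm1$. $\lambda(L) := \min\{\lVert v\rVert_1 : 0 \ne v\in L\}$ with $\lVert\cdot\rVert_1$ the $\ell_1$-norm. A vector $u\in L(A)$ is a circuit of $A$ if there is no nonzero $v\in L(A)$ with $\mathrm{supp}(v) \subsetneq \mathrm{supp}(u)$, and $\gcd(u_1,\dots,u_m) = 1$. *)

theory Defs
  imports "Jordan_Normal_Form.Determinant" "Jordan_Normal_Form.DL_Submatrix"
begin

definition totally_unimodular :: "int mat \<Rightarrow> bool" where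
  "totally_unimodular A \<longleftrightarrow>
     (\<forall>I J. I \<subseteq> {..<dim_row A} \<longrightarrow> J \<subseteq> {..<dim_col A} \<longrightarrow> card I = card J \<longrightarrow>
        det (submatrix A I J) \<in> {-1, 0, 1})"

definition int_kernel :: "int mat \<Rightarrow> int vec set" where
  "int_kernel A = {v \<in> carrier_vec (dim_col A). A *\<^sub>v v = 0\<^sub>v (dim_row A)}"

definition l1norm :: "int vec \<Rightarrow> nat" where
  "l1norm v = (\<Sum>i<dim_vec v. nat \<bar>v $ i\<bar>)"

definition lattice_lambda :: "int vec set \<Rightarrow> nat" where
  "lattice_lambda L = (LEAST k. \<exists>v\<in>L. v \<noteq> 0\<^sub>v (dim_vec v) \<and> l1norm v = k)"

definition supp :: "int vec \<Rightarrow> nat set" where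
  "supp v = {i. i < dim_vec v \<and> v $ i \<noteq> 0}"

definition is_circuit :: "int mat \<Rightarrow> int vec \<Rightarrow> bool" where
  "is_circuit A u \<longleftrightarrow> u \<in> int_kernel A
     \<and> \<not> (\<exists>v\<in>int_kernel A. v \<noteq> 0\<^sub>v (dim_vec v) \<and> supp v \<subset> supp u)
     \<and> Gcd {u $ i | i. i < dim_vec u} = 1"

end

theory Submission
  imports Defs
begin

definition idx :: "nat set \<Rightarrow> nat \<Rightarrow> nat" where "idx J j = card {a\<in>J. a < j}"

lemma pick_in: "finite J \<Longrightarrow> k < card J \<Longrightarrow> pick J k \<in> J"
  using pick_in_set by blast

lemma idx_lt: assumes "finite J" "j \<in> J" shows "idx J j < card J"
  unfolding idx_def using assms by (intro psubset_card_mono) auto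

lemma idx_pick: "k < card J \<Longrightarrow> idx J (pick J k) = k"
  unfolding idx_def using card_pick by blast

lemma pick_idx: "j \<in> J \<Longrightarrow> pick J (idx J j) = j"
  unfolding idx_def by (rule pick_card_in_set)

lemma bij_pick: assumes "finite J" shows "bij_betw (pick J) {..<card J} J"
  unfolding bij_betw_def
proof
  show "inj_on (pick J) {..<card J}"
    by (metis idx_pick inj_onI lessThan_iff)
  show "pick J ` {..<card J} = J"
    using assms pick_in idx_lt pick_idx by (auto intro!: image_eqI)
qed

lemma sum_pick: assumes "finite J" shows "(\<Sum>k<card J. f (pick J k)) = (\<Sum>j\<in>J. f j)"
  using sum.reindex_bij_betw[OF bij_pick[OF assms]] .

lemma card_sub: "J \<subseteq> {..<N} \<Longrightarrow> card {j. j<N \<and> j\<in>J} = card J"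
  by (metis (no_types, lifting) Collect_cong lessThan_iff subset_iff Collect_mem_eq)

definition supon :: "nat set \<Rightarrow> 'a::zero vec \<Rightarrow> bool" where
  "supon S x \<longleftrightarrow> (\<forall>j<dim_vec x. j \<notin> S \<longrightarrow> x $ j = 0)"

lemma mult_supon: fixes B :: "'a::comm_ring_1 mat"
  assumes "B \<in> carrier_mat n m" "x \<in> carrier_vec m" "supon S x" "S \<subseteq> {..<m}" "i < n"
  shows "(B *\<^sub>v x) $ i = (\<Sum>j\<in>S. B $$ (i,j) * x $ j)"
proof -
  have "(B *\<^sub>v x) $ i = (\<Sum>j<m. B $$ (i,j) * x $ j)"
    using assms by (auto simp: scalar_prod_def intro!: sum.cong)
  also have "\<dots> = (\<Sum>j\<in>S. B $$ (i,j) * x $ j)"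
    using assms(2,3,4) by (intro sum.mono_neutral_left[symmetric]) (auto simp: supon_def)
  finally show ?thesis .
qed

lemma submatrix_mult: fixes B :: "'a::comm_ring_1 mat"
  assumes "B \<in> carrier_mat n m" "I \<subseteq> {..<n}" "J \<subseteq> {..<m}" "x' \<in> carrier_vec (card J)" "k < card I"
  shows "(submatrix B I J *\<^sub>v x') $ k = (\<Sum>j\<in>J. B $$ (pick I k, j) * x' $ idx J j)"
proof -
  have fJ: "finite J" using assms(3) finite_subset by blast
  have d: "dim_row (submatrix B I J) = card I" "dim_col (submatrix B I J) = card J"
    using assms by (auto simp: dim_submatrix card_sub)
  have "(submatrix B I J *\<^sub>v x') $ k = (\<Sum>l<card J. submatrix B I J $$ (k,l) * x' $ l)"
    using assms d by (auto simp: scalar_prod_def intro!: sum.cong)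
  also have "\<dots> = (\<Sum>l<card J. B $$ (pick I k, pick J l) * x' $ idx J (pick J l))"
    using assms d by (intro sum.cong) (auto simp: submatrix_index card_sub idx_pick)
  also have "\<dots> = (\<Sum>j\<in>J. B $$ (pick I k, j) * x' $ idx J j)"
    using sum_pick[OF fJ, of "\<lambda>j. B $$ (pick I k, j) * x' $ idx J j"] .
  finally show ?thesis .
qed

lemma ns_inj: fixes B :: "'a::field mat"
  assumes B: "B \<in> carrier_mat n m" and IJ: "I \<subseteq> {..<n}" "J \<subseteq> {..<m}" "card I = card J"
    and dt: "det (submatrix B I J) \<noteq> 0" and x: "x \<in> carrier_vec m" "supon J x"
    and z: "\<forall>i\<in>I. (B *\<^sub>v x) $ i = 0"
  shows "x = 0\<^sub>v m"
proof -
  have fJ: "finite J" "finite I" using IJ finite_subset by blast+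
  let ?M = "submatrix B I J"
  define x' where "x' = vec (card J) (\<lambda>k. x $ pick J k)"
  have M: "?M \<in> carrier_mat (card J) (card J)"
    using B IJ by (auto simp: dim_submatrix card_sub intro!: carrier_matI)
  have x': "x' \<in> carrier_vec (card J)" unfolding x'_def by auto
  have "?M *\<^sub>v x' = 0\<^sub>v (card J)"
  proof (rule eq_vecI)
    fix k assume "k < dim_vec (0\<^sub>v (card J) :: 'a vec)"
    hence k: "k < card I" using IJ by simp
    have "(?M *\<^sub>v x') $ k = (\<Sum>j\<in>J. B $$ (pick I k, j) * x' $ idx J j)"
      using submatrix_mult[OF B IJ(1,2) x' k] .
    also have "\<dots> = (\<Sum>j\<in>J. B $$ (pick I k, j) * x $ j)"
      using fJ IJ by (intro sum.cong) (auto simp: x'_def idx_lt pick_idx)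
    also have "\<dots> = (B *\<^sub>v x) $ pick I k"
      using mult_supon[OF B x(1) x(2) IJ(2), of "pick I k"] pick_in[OF fJ(2) k] IJ by auto
    also have "\<dots> = 0" using z pick_in[OF fJ(2) k] by auto
    finally show "(?M *\<^sub>v x') $ k = 0\<^sub>v (card J) $ k" using k IJ by simp
  qed (use M in auto)
  hence x'0: "x' = 0\<^sub>v (card J)" using det_0_iff_vec_prod_zero_field[OF M] dt x' by blast
  show ?thesis
  proof (rule eq_vecI)
    fix j assume "j < dim_vec (0\<^sub>v m :: 'a vec)"
    hence j: "j < m" by simp
    show "x $ j = 0\<^sub>v m $ j"
    proof (cases "j \<in> J")
      case True
      have "x $ j = x' $ idx J j" using True fJ by (simp add: x'_def idx_lt pick_idx)
      thus ?thesis using x'0 j True fJ idx_lt by simp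
    next
      case False thus ?thesis using x j by (simp add: supon_def)
    qed
  qed (use x in auto)
qed

lemma sing_ker: fixes B :: "'a::field mat"
  assumes B: "B \<in> carrier_mat n m" and IJ: "I \<subseteq> {..<n}" "J \<subseteq> {..<m}" "card I = card J"
    and dt: "det (submatrix B I J) = 0"
  shows "\<exists>x\<in>carrier_vec m. supon J x \<and> x \<noteq> 0\<^sub>v m \<and> (\<forall>i\<in>I. (B *\<^sub>v x) $ i = 0)"
proof -
  have fJ: "finite J" "finite I" using IJ finite_subset by blast+
  let ?M = "submatrix B I J"
  have M: "?M \<in> carrier_mat (card J) (card J)"
    using B IJ by (auto simp: dim_submatrix card_sub intro!: carrier_matI)
  obtain x' where x': "x' \<in> carrier_vec (card J)" "x' \<noteq> 0\<^sub>v (card J)" "?M *\<^sub>v x' = 0\<^sub>v (card J)"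
    using det_0_iff_vec_prod_zero_field[OF M] dt by blast
  define x where "x = vec m (\<lambda>j. if j \<in> J then x' $ idx J j else 0)"
  have xc: "x \<in> carrier_vec m" unfolding x_def by auto
  have sx: "supon J x" unfolding supon_def x_def by auto
  have "\<forall>i\<in>I. (B *\<^sub>v x) $ i = 0"
  proof
    fix i assume i: "i \<in> I"
    have k: "idx I i < card I" using idx_lt fJ i by blast
    have "(B *\<^sub>v x) $ i = (\<Sum>j\<in>J. B $$ (i,j) * x $ j)"
      using mult_supon[OF B xc sx IJ(2)] i IJ by auto
    also have "\<dots> = (\<Sum>j\<in>J. B $$ (pick I (idx I i), j) * x' $ idx J j)"
      using IJ i by (intro sum.cong) (auto simp: x_def pick_idx)
    also have "\<dots> = (?M *\<^sub>v x') $ idx I i"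
      using submatrix_mult[OF B IJ(1,2) x'(1) k] by simp
    also have "\<dots> = 0" using x'(3) k IJ by simp
    finally show "(B *\<^sub>v x) $ i = 0" .
  qed
  moreover have "x \<noteq> 0\<^sub>v m"
  proof
    assume x0: "x = 0\<^sub>v m"
    have "x' = 0\<^sub>v (card J)"
    proof (rule eq_vecI)
      fix k assume "k < dim_vec (0\<^sub>v (card J) :: 'a vec)"
      hence k: "k < card J" by simp
      have pj: "pick J k \<in> J" "pick J k < m" using pick_in[OF fJ(1) k] IJ by auto
      have "x $ pick J k = x' $ k" using pj by (simp add: x_def idx_pick k)
      thus "x' $ k = 0\<^sub>v (card J) $ k" using x0 pj k by simp
    qed (use x' in auto)
    thus False using x' by blast
  qed
  ultimately show ?thesis using xc sx by blast
qed

lemma sum_delta_aux: fixes d :: "'a::field" assumes "i < r"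
  shows "(\<Sum>ia = 0..<r. d * (if ia = i then 1 else 0) * b $ ia) = d * b $ i"
proof -
  have "(\<Sum>ia = 0..<r. d * (if ia = i then 1 else 0) * b $ ia) = (\<Sum>ia = 0..<r. if ia = i then d * b $ ia else 0)"
    by (rule sum.cong) auto
  thus ?thesis using assms by simp
qed

lemma ns_solve: fixes M :: "'a::field mat"
  assumes M: "M \<in> carrier_mat r r" and dt: "det M \<noteq> 0" and b: "b \<in> carrier_vec r"
  shows "\<exists>x\<in>carrier_vec r. M *\<^sub>v x = b"
proof -
  define x where "x = (1 / det M) \<cdot>\<^sub>v (adj_mat M *\<^sub>v b)"
  have adj: "adj_mat M \<in> carrier_mat r r" using adj_mat[OF M] by auto
  have "M *\<^sub>v x = (1 / det M) \<cdot>\<^sub>v (M *\<^sub>v (adj_mat M *\<^sub>v b))"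
    unfolding x_def using M adj b by (simp add: mult_mat_vec)
  also have "M *\<^sub>v (adj_mat M *\<^sub>v b) = (M * adj_mat M) *\<^sub>v b"
    using M adj b by (simp add: assoc_mult_mat_vec)
  also have "\<dots> = (det M \<cdot>\<^sub>m 1\<^sub>m r) *\<^sub>v b" using adj_mat(2)[OF M] by simp
  also have "\<dots> = det M \<cdot>\<^sub>v b"
  proof (rule eq_vecI)
    fix i assume "i < dim_vec (det M \<cdot>\<^sub>v b)"
    hence i: "i < r" using b by simp
    show "((det M \<cdot>\<^sub>m 1\<^sub>m r) *\<^sub>v b) $ i = (det M \<cdot>\<^sub>v b) $ i" using i b by (simp add: scalar_prod_def sum_delta_aux)
  qed (use b in simp)
  finally have "M *\<^sub>v x = b" using dt by (simp add: smult_smult_assoc)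
  thus ?thesis using adj b unfolding x_def by auto
qed

lemma ints_det: fixes N :: "rat mat"
  assumes N: "N \<in> carrier_mat r r" and ent: "\<And>i j. i < r \<Longrightarrow> j < r \<Longrightarrow> N $$ (i,j) \<in> \<int>"
  shows "det N \<in> \<int>"
proof -
  have "N = map_mat rat_of_int (map_mat floor N)"
    using N ent by (intro eq_matI) auto
  hence "det N = rat_of_int (det (map_mat floor N))"
    by (metis of_int_hom.hom_det)
  thus ?thesis by simp
qed

lemma submatrix_map: "submatrix (map_mat f A) I J = map_mat f (submatrix A I J)"
  by (intro eq_matI) (auto simp: submatrix_def pick_le)

lemma tu_rat: assumes A: "A \<in> carrier_mat n m" and TU: "totally_unimodular A"
  and IJ: "I \<subseteq> {..<n}" "J \<subseteq> {..<m}" "card I = card J"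
  shows "det (submatrix (map_mat rat_of_int A) I J) \<in> {-1,0,1}"
proof -
  have "det (submatrix A I J) \<in> {-1,0,1}" using TU IJ A unfolding totally_unimodular_def by auto
  thus ?thesis unfolding submatrix_map of_int_hom.hom_det by auto
qed

lemma core:
  fixes A :: "int mat" and y :: "rat vec"
  assumes A: "A \<in> carrier_mat n m" and TU: "totally_unimodular A"
    and y: "y \<in> carrier_vec m" and Ay: "map_mat rat_of_int A *\<^sub>v y = 0\<^sub>v n"
    and j0: "j0 < m" "y $ j0 \<notin> \<int>"
  shows "\<exists>d\<in>carrier_vec m. map_mat rat_of_int A *\<^sub>v d = 0\<^sub>v n \<and> supon {j. j<m \<and> y$j \<notin> \<int>} d \<and> d \<noteq> 0\<^sub>v m"
proof (rule ccontr)
  define B where "B = map_mat rat_of_int A"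
  define F where "F = {j. j<m \<and> y$j \<notin> \<int>}"
  assume "\<not> ?thesis"
  hence H: "\<And>d. d \<in> carrier_vec m \<Longrightarrow> B *\<^sub>v d = 0\<^sub>v n \<Longrightarrow> supon F d \<Longrightarrow> d = 0\<^sub>v m"
    unfolding B_def F_def by blast
  have B: "B \<in> carrier_mat n m" using A by (simp add: B_def)
  have Fm: "F \<subseteq> {..<m}" and fF: "finite F" unfolding F_def by auto
  have j0F: "j0 \<in> F" using j0 by (simp add: F_def)
  have tu: "\<And>I J. I \<subseteq> {..<n} \<Longrightarrow> J \<subseteq> {..<m} \<Longrightarrow> card I = card J \<Longrightarrow> det (submatrix B I J) \<in> {-1,0,1}"
    using tu_rat[OF A TU] by (simp add: B_def)
  define P where "P r = (\<exists>I J. I \<subseteq> {..<n} \<and> J \<subseteq> F \<and> card I = r \<and> card J = r \<and> det (submatrix B I J) \<noteq> 0)" for r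
  have P0: "P 0"
  proof -
    have "submatrix B {} {} \<in> carrier_mat 0 0" unfolding submatrix_def by simp
    hence "det (submatrix B {} {}) = 1" by (rule det_dim_zero)
    hence "{} \<subseteq> {..<n} \<and> {} \<subseteq> F \<and> card ({}::nat set) = 0 \<and> card ({}::nat set) = 0 \<and> det (submatrix B {} {}) \<noteq> 0" by simp
    thus ?thesis unfolding P_def by (intro exI[of _ "{}"])
  qed
  have Pb: "r \<le> card F" if "P r" for r
    using that unfolding P_def
  proof (elim exE conjE)
    fix I J assume h: "I \<subseteq> {..<n}" "J \<subseteq> F" "card I = r" "card J = r" "det (submatrix B I J) \<noteq> 0"
    show "r \<le> card F" using card_mono[OF fF h(2)] h(4) by simp
  qed
  define r0 where "r0 = Max {r. P r}"
  have finP: "finite {r. P r}"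
  proof (rule finite_subset[of _ "{..card F}"])
    show "{r. P r} \<subseteq> {..card F}" using Pb by auto
  qed simp
  have Pr0: "P r0" unfolding r0_def using Max_in[OF finP] P0 by auto
  have maxr: "P r \<Longrightarrow> r \<le> r0" for r unfolding r0_def using Max_ge[OF finP] by auto
  obtain I J where IJ: "I \<subseteq> {..<n}" "J \<subseteq> F" "card I = r0" "card J = r0" and dt: "det (submatrix B I J) \<noteq> 0"
    using Pr0 unfolding P_def by blast
  have Jm: "J \<subseteq> {..<m}" using IJ Fm by auto
  have fI: "finite I" "finite J" using finite_subset[OF IJ(1)] finite_subset[OF IJ(2) fF] by auto
  show False
  proof (cases "card J = card F")
    case True
    hence JF: "J = F" using card_subset_eq[OF fF IJ(2)] by simp
    let ?M = "submatrix B I F"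
    have M: "?M \<in> carrier_mat (card F) (card F)"
      using B IJ JF Fm by (auto simp: dim_submatrix card_sub intro!: carrier_matI)
    have dM: "det ?M \<in> {-1,1}" using tu[OF IJ(1) Fm] IJ JF dt by auto
    define y' where "y' = vec (card F) (\<lambda>k. y $ pick F k)"
    have y': "y' \<in> carrier_vec (card F)" by (simp add: y'_def)
    have Mint: "(?M *\<^sub>v y') $ k \<in> \<int>" if k: "k < card F" for k
    proof -
      have kI: "k < card I" using k IJ JF by simp
      have pI: "pick I k \<in> I" "pick I k < n" using pick_in[OF fI(1) kI] IJ by auto
      have "(?M *\<^sub>v y') $ k = (\<Sum>j\<in>F. B $$ (pick I k, j) * y' $ idx F j)"
        using submatrix_mult[OF B IJ(1) Fm y' kI] .
      also have "\<dots> = (\<Sum>j\<in>F. B $$ (pick I k, j) * y $ j)"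
        using fF by (intro sum.cong) (auto simp: y'_def idx_lt pick_idx)
      finally have e1: "(?M *\<^sub>v y') $ k = (\<Sum>j\<in>F. B $$ (pick I k, j) * y $ j)" .
      have "0 = (B *\<^sub>v y) $ pick I k" using Ay pI by (simp add: B_def)
      also have "\<dots> = (\<Sum>j\<in>{..<m}. B $$ (pick I k, j) * y $ j)"
        using mult_supon[OF B y _ _ pI(2), of "{..<m}"] y by (auto simp: supon_def)
      also have "\<dots> = (\<Sum>j\<in>{..<m} - F. B $$ (pick I k, j) * y $ j) + (\<Sum>j\<in>F. B $$ (pick I k, j) * y $ j)"
        using Fm by (simp add: sum.subset_diff)
      finally have e2: "(\<Sum>j\<in>F. B $$ (pick I k, j) * y $ j) = - (\<Sum>j\<in>{..<m} - F. B $$ (pick I k, j) * y $ j)"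
        by simp
      have "(\<Sum>j\<in>{..<m} - F. B $$ (pick I k, j) * y $ j) \<in> \<int>"
      proof (rule Ints_sum)
        fix j assume "j \<in> {..<m} - F"
        hence "j < m" "y $ j \<in> \<int>" by (auto simp: F_def)
        thus "B $$ (pick I k, j) * y $ j \<in> \<int>" using pI A by (simp add: B_def)
      qed
      thus ?thesis using e1 e2 by simp
    qed
    have "y $ j0 \<in> \<int>"
    proof -
      define k where "k = idx F j0"
      have k: "k < card F" using idx_lt[OF fF j0F] by (simp add: k_def)
      have yk: "y' $ k = y $ j0" using k j0F by (simp add: y'_def k_def pick_idx)
      have "det (replace_col ?M (?M *\<^sub>v y') k) = y' $ k * det ?M"
        using cramer_lemma_mat[OF M y' k] .
      moreover have "det (replace_col ?M (?M *\<^sub>v y') k) \<in> \<int>"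
      proof (rule ints_det)
        show "replace_col ?M (?M *\<^sub>v y') k \<in> carrier_mat (card F) (card F)"
          using M by (simp add: replace_col_def)
        fix i j assume ij: "i < card F" "j < card F"
        have ci: "card {i. i < dim_row B \<and> i \<in> I} = card F" using B IJ JF card_sub[OF IJ(1)] by simp
        have cj: "card {j. j < dim_col B \<and> j \<in> F} = card F" using B card_sub[OF Fm] by simp
        have "?M $$ (i,j) = B $$ (pick I i, pick F j)" using submatrix_index[of i B I j F] ij ci cj by simp
        moreover have "pick I i < n" using pick_in[OF fI(1), of i] ij IJ JF by auto
        moreover have "pick F j < m" using pick_in[OF fF, of j] ij Fm by auto
        ultimately have "?M $$ (i,j) \<in> \<int>" using A by (simp add: B_def)
        thus "replace_col ?M (?M *\<^sub>v y') k $$ (i, j) \<in> \<int>"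
          using Mint[OF ij(1)] ij M by (auto simp: replace_col_def)
      qed
      ultimately have "y' $ k * det ?M \<in> \<int>" by simp
      moreover have "det ?M \<in> \<int>" using dM by auto
      ultimately have "y' $ k * det ?M * det ?M \<in> \<int>" by (rule Ints_mult)
      moreover have "det ?M * det ?M = 1" using dM by auto
      ultimately show ?thesis using yk by (simp add: mult.assoc)
    qed
    thus False using j0 by simp
  next
    case False
    hence "card J < card F" using card_mono[OF fF IJ(2)] by linarith
    hence "\<not> F \<subseteq> J"
    proof -
      assume lt: "card J < card F"
      show ?thesis
      proof
        assume "F \<subseteq> J" hence "card F \<le> card J" by (rule card_mono[OF fI(2)])
        thus False using lt by simp
      qed
    qed
    then obtain c where c: "c \<in> F" "c \<notin> J" by blast
    have cm: "c < m" using c Fm by auto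
    let ?M = "submatrix B I J"
    have M: "?M \<in> carrier_mat r0 r0"
      using B IJ Jm by (auto simp: dim_submatrix card_sub intro!: carrier_matI)
    define b' where "b' = vec r0 (\<lambda>k. - B $$ (pick I k, c))"
    have b'c: "b' \<in> carrier_vec r0" by (simp add: b'_def)
    obtain x' where x': "x' \<in> carrier_vec r0" "?M *\<^sub>v x' = b'"
      using ns_solve[OF M dt b'c] by blast
    define d where "d = vec m (\<lambda>j. if j \<in> J then x' $ idx J j else if j = c then 1 else 0)"
    have dc: "d \<in> carrier_vec m" by (simp add: d_def)
    have sd: "supon (insert c J) d" by (simp add: d_def supon_def)
    have cJm: "insert c J \<subseteq> {..<m}" using Jm cm by auto
    have dI: "(B *\<^sub>v d) $ i = 0" if i: "i \<in> I" for i
    proof -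
      have im: "i < n" using i IJ by auto
      have k: "idx I i < r0" using idx_lt[OF fI(1) i] IJ by simp
      have "(B *\<^sub>v d) $ i = (\<Sum>j\<in>insert c J. B $$ (i,j) * d $ j)"
        using mult_supon[OF B dc sd cJm im] .
      also have "\<dots> = B $$ (i,c) + (\<Sum>j\<in>J. B $$ (i,j) * d $ j)"
        using c fI by (simp add: d_def cm)
      also have "(\<Sum>j\<in>J. B $$ (i,j) * d $ j) = (\<Sum>j\<in>J. B $$ (pick I (idx I i),j) * x' $ idx J j)"
        using Jm i by (intro sum.cong) (auto simp: d_def pick_idx)
      also have "\<dots> = (?M *\<^sub>v x') $ idx I i"
        using submatrix_mult[OF B IJ(1) Jm _ , of x' "idx I i"] x' k IJ by simp
      also have "\<dots> = - B $$ (i, c)" using x' k by (simp add: b'_def pick_idx i)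
      finally show ?thesis by simp
    qed
    have "B *\<^sub>v d = 0\<^sub>v n"
    proof (rule eq_vecI)
      fix i assume "i < dim_vec (0\<^sub>v n :: rat vec)"
      hence im: "i < n" by simp
      show "(B *\<^sub>v d) $ i = 0\<^sub>v n $ i"
      proof (cases "i \<in> I")
        case True thus ?thesis using dI im by simp
      next
        case False
        let ?I' = "insert i I" and ?J' = "insert c J"
        have cards: "card ?I' = r0 + 1" "card ?J' = r0 + 1" using False c fI IJ by auto
        have nP: "\<not> P (r0 + 1)" using maxr[of "r0+1"] by linarith
        have d0: "det (submatrix B ?I' ?J') = 0"
        proof (rule ccontr)
          assume "det (submatrix B ?I' ?J') \<noteq> 0"
          hence "P (r0+1)" unfolding P_def using cards IJ im c
            by (intro exI[of _ ?I'] exI[of _ ?J']) auto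
          thus False using nP by blast
        qed
        obtain e where e: "e \<in> carrier_vec m" "supon ?J' e" "e \<noteq> 0\<^sub>v m" "\<forall>l\<in>?I'. (B *\<^sub>v e) $ l = 0"
          using sing_ker[OF B _ cJm _ d0] IJ im cards by auto
        have ec: "e $ c \<noteq> 0"
        proof
          assume ec0: "e $ c = 0"
          have "supon J e" using e(2) ec0 by (auto simp: supon_def)
          hence "e = 0\<^sub>v m" using ns_inj[OF B IJ(1) Jm _ dt e(1)] e(4) IJ by auto
          thus False using e(3) by simp
        qed
        define g where "g = e - e $ c \<cdot>\<^sub>v d"
        have gc: "g \<in> carrier_vec m" using e dc by (simp add: g_def)
        have Bg: "B *\<^sub>v g = B *\<^sub>v e - e $ c \<cdot>\<^sub>v (B *\<^sub>v d)"
          using B e(1) dc by (simp add: g_def mult_minus_distrib_mat_vec mult_mat_vec)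
        have sg: "supon J g"
          using e(1,2) dc unfolding supon_def g_def by (auto simp: d_def)
        have "\<forall>l\<in>I. (B *\<^sub>v g) $ l = 0"
        proof
          fix l assume l: "l \<in> I"
          hence "l < n" using IJ(1) by auto
          moreover have "(B *\<^sub>v e) $ l = 0" using e(4) l by blast
          moreover have "(B *\<^sub>v d) $ l = 0" using dI[OF l] .
          ultimately show "(B *\<^sub>v g) $ l = 0" unfolding Bg using B by simp
        qed
        hence "g = 0\<^sub>v m" using ns_inj[OF B IJ(1) Jm _ dt gc sg] IJ by auto
        hence g0: "g = 0\<^sub>v m" .
        have ee: "e = e $ c \<cdot>\<^sub>v d"
        proof (rule eq_vecI)
          fix j assume "j < dim_vec (e $ c \<cdot>\<^sub>v d)"
          hence j: "j < m" using dc by simp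
          have "g $ j = 0" using g0 j by simp
          thus "e $ j = (e $ c \<cdot>\<^sub>v d) $ j" using j e(1) dc by (simp add: g_def)
        qed (use e(1) dc in simp)
        have "B *\<^sub>v e = B *\<^sub>v (e $ c \<cdot>\<^sub>v d)" using ee by (rule arg_cong)
        also have "\<dots> = e $ c \<cdot>\<^sub>v (B *\<^sub>v d)" using mult_mat_vec[OF B dc] .
        finally have "(B *\<^sub>v e) $ i = e $ c * (B *\<^sub>v d) $ i" using im B by simp
        thus ?thesis using e(4) ec im by simp
      qed
    qed (use B in simp)
    hence "d = 0\<^sub>v m" using H[OF dc] sd c(1) IJ(2) by (auto simp: supon_def intro: H)
    moreover have "d $ c = 1" using c cm by (simp add: d_def)
    ultimately show False using cm by simp
  qed
qed

lemma map_kernel: fixes A :: "int mat"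
  assumes A: "A \<in> carrier_mat n m" and z: "z \<in> carrier_vec m"
    and e: "map_mat rat_of_int A *\<^sub>v map_vec rat_of_int z = 0\<^sub>v n"
  shows "A *\<^sub>v z = 0\<^sub>v n"
proof -
  have h: "map_vec rat_of_int (A *\<^sub>v z) = map_mat rat_of_int A *\<^sub>v map_vec rat_of_int z"
    by (rule of_int_hom.mult_mat_vec_hom[OF A z])
  show ?thesis using trans[OF h e] by simp
qed

lemma rounding:
  fixes A :: "int mat"
  assumes A: "A \<in> carrier_mat n m" and TU: "totally_unimodular A"
  shows "y \<in> carrier_vec m \<Longrightarrow> map_mat rat_of_int A *\<^sub>v y = 0\<^sub>v n \<Longrightarrow>
    \<exists>z\<in>carrier_vec m. A *\<^sub>v z = 0\<^sub>v n \<and> (\<forall>j<m. \<lfloor>y$j\<rfloor> \<le> z$j \<and> z$j \<le> \<lceil>y$j\<rceil>)"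
proof (induction "card {j. j<m \<and> y$j \<notin> \<int>}" arbitrary: y rule: less_induct)
  case less
  define F where "F = {j. j<m \<and> y$j \<notin> \<int>}"
  have fF: "finite F" unfolding F_def by auto
  let ?B = "map_mat rat_of_int A"
  have B: "?B \<in> carrier_mat n m" using A by simp
  show ?case
  proof (cases "F = {}")
    case True
    define z where "z = vec m (\<lambda>j. \<lfloor>y$j\<rfloor>)"
    have zc: "z \<in> carrier_vec m" by (simp add: z_def)
    have yi: "j < m \<Longrightarrow> y $ j \<in> \<int>" for j using True by (auto simp: F_def)
    have "map_vec rat_of_int z = y"
    proof (rule eq_vecI)
      fix j assume "j < dim_vec y" hence j: "j < m" using less by simp
      show "map_vec rat_of_int z $ j = y $ j" using yi[OF j] j
        by (auto simp: z_def elim!: Ints_cases)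
    qed (use less zc in simp)
    hence "A *\<^sub>v z = 0\<^sub>v n" using map_kernel[OF A zc] less by simp
    moreover have "\<forall>j<m. \<lfloor>y$j\<rfloor> \<le> z$j \<and> z$j \<le> \<lceil>y$j\<rceil>"
      by (auto simp: z_def floor_le_ceiling)
    ultimately show ?thesis using zc by blast
  next
    case False
    then obtain j0 where j0: "j0 < m" "y $ j0 \<notin> \<int>" by (auto simp: F_def)
    obtain d where dc: "d \<in> carrier_vec m" and Bd: "?B *\<^sub>v d = 0\<^sub>v n"
      and sd: "supon F d" and d0: "d \<noteq> 0\<^sub>v m"
      using core[OF A TU less(2,3) j0] unfolding F_def by blast
    define G where "G = {j. j<m \<and> d$j \<noteq> 0}"
    have GF: "G \<subseteq> F" using sd dc unfolding G_def supon_def by auto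
    have fG: "finite G" unfolding G_def by auto
    have Gne: "G \<noteq> {}"
    proof
      assume "G = {}"
      hence "d = 0\<^sub>v m" using dc by (intro eq_vecI) (auto simp: G_def)
      thus False using d0 by simp
    qed
    define s where "s j = (if d$j > 0 then (of_int \<lceil>y$j\<rceil> - y$j) / d$j else (of_int \<lfloor>y$j\<rfloor> - y$j) / d$j)" for j
    have spos: "s j > 0" if "j \<in> G" for j
    proof -
      have yn: "y $ j \<notin> \<int>" using that GF by (auto simp: F_def)
      have "of_int \<lfloor>y$j\<rfloor> < y$j" using yn
        by (metis Ints_of_int floor_less_iff linorder_less_linear not_less_iff_gr_or_eq of_int_floor_le order_less_le)
      moreover have "y$j < of_int \<lceil>y$j\<rceil>" using yn
        by (metis Ints_of_int le_of_int_ceiling order_less_le)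
      moreover have "d$j \<noteq> 0" using that by (simp add: G_def)
      ultimately show ?thesis unfolding s_def
        by (auto simp: divide_pos_pos divide_neg_neg intro: divide_pos_pos divide_neg_neg)
    qed
    define t where "t = Min (s ` G)"
    have tin: "t \<in> s ` G" unfolding t_def using fG Gne by (intro Min_in) auto
    then obtain j1 where j1: "j1 \<in> G" "s j1 = t" by auto
    have tpos: "t > 0" using spos j1 by auto
    have tle: "t \<le> s j" if "j \<in> G" for j unfolding t_def using fG that by (intro Min_le) auto
    define y' where "y' = y + t \<cdot>\<^sub>v d"
    have y'c: "y' \<in> carrier_vec m" using less(2) dc by (simp add: y'_def)
    have y'j: "y' $ j = y $ j + t * d $ j" if "j < m" for j using that less(2) dc by (simp add: y'_def)
    have By': "?B *\<^sub>v y' = 0\<^sub>v n"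
    proof -
      have "?B *\<^sub>v y' = ?B *\<^sub>v y + t \<cdot>\<^sub>v (?B *\<^sub>v d)"
        using B less(2) dc by (simp add: y'_def mult_add_distrib_mat_vec mult_mat_vec)
      also have "\<dots> = 0\<^sub>v n" unfolding less(3) Bd by (intro eq_vecI) auto
      finally show ?thesis .
    qed
    have bnd: "of_int \<lfloor>y$j\<rfloor> \<le> y'$j \<and> y'$j \<le> of_int \<lceil>y$j\<rceil>" if j: "j < m" for j
    proof (cases "j \<in> G")
      case False
      hence "d $ j = 0" using j by (simp add: G_def)
      thus ?thesis using y'j[OF j] by (simp add: of_int_floor_le le_of_int_ceiling)
    next
      case True
      have ts: "t \<le> s j" using tle True .
      show ?thesis
      proof (cases "d$j > 0")
        case dp: True
        have "t * d$j \<le> s j * d$j" using ts dp by (simp add: mult_right_mono)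
        also have "s j * d$j = of_int \<lceil>y$j\<rceil> - y$j" using dp by (simp add: s_def)
        finally have 1: "y'$j \<le> of_int \<lceil>y$j\<rceil>" using y'j[OF j] by simp
        have "0 \<le> t * d$j" using tpos dp by simp
        hence "y$j \<le> y'$j" using y'j[OF j] by simp
        thus ?thesis using 1 of_int_floor_le[of "y$j"] by linarith
      next
        case dn: False
        hence dn': "d$j < 0" using True by (simp add: G_def)
        have "s j * d$j \<le> t * d$j" using ts dn' by (simp add: mult_right_mono_neg)
        also have "s j * d$j = of_int \<lfloor>y$j\<rfloor> - y$j" using dn dn' by (simp add: s_def)
        finally have 1: "of_int \<lfloor>y$j\<rfloor> \<le> y'$j" using y'j[OF j] by simp
        have "t * d$j \<le> 0" using tpos dn' by (simp add: mult_nonneg_nonpos)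
        hence "y'$j \<le> y$j" using y'j[OF j] by simp
        thus ?thesis using 1 le_of_int_ceiling[of "y$j"] by linarith
      qed
    qed
    have j1m: "j1 < m" using j1 by (simp add: G_def)
    have y'j1: "y' $ j1 \<in> \<int>"
    proof -
      have dj: "d $ j1 \<noteq> 0" using j1 by (simp add: G_def)
      have "y' $ j1 = y $ j1 + s j1 * d $ j1" using y'j[OF j1m] j1 by simp
      also have "\<dots> = (if d$j1 > 0 then of_int \<lceil>y$j1\<rceil> else of_int \<lfloor>y$j1\<rfloor>)"
        using dj by (simp add: s_def)
      finally show ?thesis by simp
    qed
    have F'sub: "{j. j<m \<and> y'$j \<notin> \<int>} \<subseteq> F - {j1}"
    proof
      fix j assume "j \<in> {j. j<m \<and> y'$j \<notin> \<int>}"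
      hence j: "j < m" "y'$j \<notin> \<int>" by auto
      have "j \<in> F"
      proof (cases "j \<in> G")
        case True thus ?thesis using GF by auto
      next
        case False
        hence "d $ j = 0" using j by (simp add: G_def)
        thus ?thesis using j y'j[OF j(1)] by (simp add: F_def)
      qed
      moreover have "j \<noteq> j1" using j y'j1 by auto
      ultimately show "j \<in> F - {j1}" by simp
    qed
    have "j1 \<in> F" using j1 GF by auto
    hence "card {j. j<m \<and> y'$j \<notin> \<int>} < card F"
      using F'sub fF by (meson card_Diff1_less card_mono finite_Diff le_less_trans)
    then obtain z where zc: "z \<in> carrier_vec m" and Az: "A *\<^sub>v z = 0\<^sub>v n"
      and zb: "\<forall>j<m. \<lfloor>y'$j\<rfloor> \<le> z$j \<and> z$j \<le> \<lceil>y'$j\<rceil>"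
      using less(1)[OF _ y'c By'] unfolding F_def by blast
    have "\<forall>j<m. \<lfloor>y$j\<rfloor> \<le> z$j \<and> z$j \<le> \<lceil>y$j\<rceil>"
    proof (intro allI impI)
      fix j assume j: "j < m"
      have "\<lfloor>y$j\<rfloor> \<le> \<lfloor>y'$j\<rfloor>" using bnd[OF j] by (simp add: le_floor_iff)
      moreover have "\<lceil>y'$j\<rceil> \<le> \<lceil>y$j\<rceil>" using bnd[OF j] by (simp add: ceiling_le_iff)
      ultimately show "\<lfloor>y$j\<rfloor> \<le> z$j \<and> z$j \<le> \<lceil>y$j\<rceil>" using zb j by force
    qed
    thus ?thesis using zc Az by blast
  qed
qed

lemma split_norm:
  assumes z: "z \<in> carrier_vec m" and v: "v \<in> carrier_vec m"
    and btw: "\<forall>j<m. (0 \<le> z$j \<and> z$j \<le> v$j) \<or> (v$j \<le> z$j \<and> z$j \<le> 0)"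
  shows "l1norm v = l1norm z + l1norm (v - z)"
proof -
  have "l1norm v = (\<Sum>i<m. nat \<bar>v$i\<bar>)" using v by (simp add: l1norm_def)
  also have "\<dots> = (\<Sum>i<m. nat \<bar>z$i\<bar> + nat \<bar>(v - z)$i\<bar>)"
  proof (rule sum.cong)
    fix i assume "i \<in> {..<m}"
    hence i: "i < m" by simp
    have "(v - z) $ i = v$i - z$i" using i z v by simp
    thus "nat \<bar>v$i\<bar> = nat \<bar>z$i\<bar> + nat \<bar>(v - z)$i\<bar>" using btw i by auto
  qed simp
  also have "\<dots> = l1norm z + l1norm (v - z)" using z v by (simp add: l1norm_def sum.distrib)
  finally show ?thesis .
qed

theorem mainTheorem5:
  fixes A :: "int mat" and n m :: nat and v :: "int vec"
  assumes "A \<in> carrier_mat n m"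
    and "totally_unimodular A"
    and "v \<in> int_kernel A"
    and "v \<noteq> 0\<^sub>v m"
    and "l1norm v < 2 * lattice_lambda (int_kernel A)"
  shows "is_circuit A v"
proof -
  note A = assms(1) and TU = assms(2)
  define L where "L = int_kernel A"
  define lam where "lam = lattice_lambda L"
  have Lc: "u \<in> L \<longleftrightarrow> u \<in> carrier_vec m \<and> A *\<^sub>v u = 0\<^sub>v n" for u
    using A by (auto simp: L_def int_kernel_def)
  have vL: "v \<in> L" using assms(3) by (simp add: L_def)
  have vc: "v \<in> carrier_vec m" and Av: "A *\<^sub>v v = 0\<^sub>v n" using vL Lc by auto
  have small: "l1norm v < 2 * lam" using assms(5) by (simp add: lam_def L_def)
  have lam_le: "lam \<le> l1norm u" if "u \<in> L" "u \<noteq> 0\<^sub>v (dim_vec u)" for u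
    unfolding lam_def lattice_lambda_def using that by (intro Least_le) blast
  have two: "False" if "z \<in> L" "z \<noteq> 0\<^sub>v m" "v - z \<noteq> 0\<^sub>v m"
      "\<forall>j<m. (0 \<le> z$j \<and> z$j \<le> v$j) \<or> (v$j \<le> z$j \<and> z$j \<le> 0)" for z
  proof -
    have zc: "z \<in> carrier_vec m" and Az: "A *\<^sub>v z = 0\<^sub>v n" using that(1) Lc by auto
    have "A *\<^sub>v (v - z) = A *\<^sub>v v - A *\<^sub>v z" using A vc zc by (simp add: mult_minus_distrib_mat_vec)
    hence "v - z \<in> L" using Av Az vc zc Lc by auto
    hence "lam \<le> l1norm (v - z)" using lam_le that(3) vc zc by simp
    moreover have "lam \<le> l1norm z" using lam_le that(1,2) zc by simp
    moreover have "l1norm v = l1norm z + l1norm (v - z)" using split_norm[OF zc vc that(4)] .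
    ultimately show False using small by linarith
  qed
  have gcd: "Gcd {v $ i | i. i < dim_vec v} = 1"
  proof (rule ccontr)
    define g where "g = Gcd {v $ i | i. i < dim_vec v}"
    assume "Gcd {v $ i | i. i < dim_vec v} \<noteq> 1"
    hence g1: "g \<noteq> 1" by (simp add: g_def)
    have gdvd: "g dvd v$i" if "i < m" for i unfolding g_def using that vc by (intro Gcd_dvd) auto
    obtain i0 where i0: "i0 < m" "v $ i0 \<noteq> 0" using assms(4) vc by (metis carrier_vecD eq_vecI index_zero_vec(1,2))
    have g0: "g \<noteq> 0" using gdvd[OF i0(1)] i0(2) by auto
    have gge: "g \<ge> 0" by (simp add: g_def)
    hence g2: "g \<ge> 2" using g0 g1 by linarith
    define u where "u = vec m (\<lambda>i. v$i div g)"
    have uc: "u \<in> carrier_vec m" by (simp add: u_def)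
    have vu: "v = g \<cdot>\<^sub>v u" using vc gdvd by (intro eq_vecI) (auto simp: u_def)
    have Au: "A *\<^sub>v u = 0\<^sub>v n"
    proof (rule eq_vecI)
      fix i assume "i < dim_vec (0\<^sub>v n :: int vec)"
      hence i: "i < n" by simp
      have "0 = (A *\<^sub>v v) $ i" using Av i by simp
      also have "\<dots> = (\<Sum>j<m. A $$ (i,j) * v $ j)" using i A vc by (simp add: scalar_prod_def lessThan_atLeast0)
      also have "\<dots> = (\<Sum>j<m. g * (A $$ (i,j) * u $ j))"
        using vu vc uc by (intro sum.cong) (auto simp: mult.left_commute)
      also have "\<dots> = g * (A *\<^sub>v u) $ i" using i A uc by (simp add: scalar_prod_def sum_distrib_left lessThan_atLeast0)
      finally show "(A *\<^sub>v u) $ i = 0\<^sub>v n $ i" using g0 i by simp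
    qed (use A in simp)
    have "u \<in> L" using uc Au Lc by simp
    moreover have "u \<noteq> 0\<^sub>v m"
    proof
      assume "u = 0\<^sub>v m" hence "v = 0\<^sub>v m" using vu by (intro eq_vecI) auto
      thus False using assms(4) by simp
    qed
    ultimately have "lam \<le> l1norm u" using lam_le uc by simp
    moreover have "l1norm v = nat g * l1norm u"
    proof -
      have "l1norm v = (\<Sum>i<m. nat \<bar>g * u$i\<bar>)" using vc vu uc by (simp add: l1norm_def)
      also have "\<dots> = (\<Sum>i<m. nat g * nat \<bar>u$i\<bar>)" using gge by (intro sum.cong) (auto simp: abs_mult nat_mult_distrib)
      also have "\<dots> = nat g * l1norm u" using uc by (simp add: l1norm_def sum_distrib_left)
      finally show ?thesis .
    qed
    moreover have "nat g \<ge> 2" using g2 by linarith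
    ultimately have "l1norm v \<ge> 2 * lam" by (metis mult_le_mono)
    thus False using small by simp
  qed
  have nosub: "\<not> (\<exists>w\<in>L. w \<noteq> 0\<^sub>v (dim_vec w) \<and> supp w \<subset> supp v)"
  proof
    assume "\<exists>w\<in>L. w \<noteq> 0\<^sub>v (dim_vec w) \<and> supp w \<subset> supp v"
    then obtain w where wL: "w \<in> L" and w0: "w \<noteq> 0\<^sub>v (dim_vec w)" and ws: "supp w \<subset> supp v" by blast
    have wc: "w \<in> carrier_vec m" and Aw: "A *\<^sub>v w = 0\<^sub>v n" using wL Lc by auto
    define S where "S = supp v"
    have S: "S = {j. j < m \<and> v$j \<noteq> 0}" using vc by (simp add: S_def supp_def)
    have wsub: "j < m \<Longrightarrow> j \<notin> S \<Longrightarrow> w $ j = 0" for j using ws wc by (auto simp: S_def supp_def)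
    obtain k where k: "k \<in> S" "w $ k = 0" using ws wc vc by (auto simp: S_def supp_def)
    obtain j2 where j2: "j2 < m" "w $ j2 \<noteq> 0" using w0 wc by (metis carrier_vecD eq_vecI index_zero_vec(1,2))
    have j2S: "j2 \<in> S" using wsub j2 by blast
    define r where "r j = rat_of_int (w$j) / rat_of_int (v$j)" for j
    have fS: "finite S" using S by auto
    define rmin where "rmin = Min (r ` S)"
    define rmax where "rmax = Max (r ` S)"
    have rle: "rmin \<le> r j" "r j \<le> rmax" if "j \<in> S" for j
      using fS that by (auto simp: rmin_def rmax_def)
    have rk: "r k = 0" using k by (simp add: r_def)
    have rj2: "r j2 \<noteq> 0" using j2 j2S S by (simp add: r_def)
    have lt: "rmin < rmax" using rle[OF k(1)] rle[OF j2S] rk rj2 by linarith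
    obtain j0 where j0: "j0 \<in> S" "r j0 = rmin"
    proof -
      have "rmin \<in> r ` S" unfolding rmin_def using fS k(1) by (intro Min_in) auto
      thus ?thesis using that by auto
    qed
    obtain j1 where j1: "j1 \<in> S" "r j1 = rmax"
    proof -
      have "rmax \<in> r ` S" unfolding rmax_def using fS k(1) by (intro Max_in) auto
      thus ?thesis using that by auto
    qed
    define be where "be = 1 / (rmax - rmin)"
    define al where "al = - rmin * be"
    define y where "y = vec m (\<lambda>j. al * rat_of_int (v$j) + be * rat_of_int (w$j))"
    have yc: "y \<in> carrier_vec m" by (simp add: y_def)
    have yS: "y $ j = rat_of_int (v$j) * ((r j - rmin) / (rmax - rmin))" if "j \<in> S" for j
    proof -
      have vj: "rat_of_int (v$j) \<noteq> 0" "j < m" using that S by auto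
      have "rat_of_int (w$j) = r j * rat_of_int (v$j)" using vj by (simp add: r_def)
      hence "y $ j = al * rat_of_int (v$j) + be * (r j * rat_of_int (v$j))" using vj by (simp add: y_def)
      also have "\<dots> = rat_of_int (v$j) * ((r j - rmin) * be)" by (simp add: al_def algebra_simps)
      finally show ?thesis by (simp add: be_def)
    qed
    have ynS: "y $ j = 0" if "j < m" "j \<notin> S" for j
      using that wsub[OF that] S by (simp add: y_def)
    have By: "map_mat rat_of_int A *\<^sub>v y = 0\<^sub>v n"
    proof -
      let ?B = "map_mat rat_of_int A"
      have Bc: "?B \<in> carrier_mat n m" using A by simp
      have vq: "?B *\<^sub>v map_vec rat_of_int v = 0\<^sub>v n"
      proof -
        have "?B *\<^sub>v map_vec rat_of_int v = map_vec rat_of_int (A *\<^sub>v v)"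
          by (rule of_int_hom.mult_mat_vec_hom[OF A vc, symmetric])
        also have "\<dots> = 0\<^sub>v n" using Av by (intro eq_vecI) auto
        finally show ?thesis .
      qed
      have wq: "?B *\<^sub>v map_vec rat_of_int w = 0\<^sub>v n"
      proof -
        have "?B *\<^sub>v map_vec rat_of_int w = map_vec rat_of_int (A *\<^sub>v w)"
          by (rule of_int_hom.mult_mat_vec_hom[OF A wc, symmetric])
        also have "\<dots> = 0\<^sub>v n" using Aw by (intro eq_vecI) auto
        finally show ?thesis .
      qed
      have "y = al \<cdot>\<^sub>v map_vec rat_of_int v + be \<cdot>\<^sub>v map_vec rat_of_int w"
        using vc wc by (intro eq_vecI) (auto simp: y_def)
      hence "?B *\<^sub>v y = al \<cdot>\<^sub>v (?B *\<^sub>v map_vec rat_of_int v) + be \<cdot>\<^sub>v (?B *\<^sub>v map_vec rat_of_int w)"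
        using Bc vc wc by (simp add: mult_add_distrib_mat_vec mult_mat_vec)
      also have "\<dots> = 0\<^sub>v n" unfolding vq wq by (intro eq_vecI) auto
      finally show ?thesis .
    qed
    obtain z where zc: "z \<in> carrier_vec m" and Az: "A *\<^sub>v z = 0\<^sub>v n"
      and zb: "\<forall>j<m. \<lfloor>y$j\<rfloor> \<le> z$j \<and> z$j \<le> \<lceil>y$j\<rceil>"
      using rounding[OF A TU yc By] by blast
    have btw: "\<forall>j<m. (0 \<le> z$j \<and> z$j \<le> v$j) \<or> (v$j \<le> z$j \<and> z$j \<le> 0)"
    proof (intro allI impI)
      fix j assume j: "j < m"
      show "(0 \<le> z$j \<and> z$j \<le> v$j) \<or> (v$j \<le> z$j \<and> z$j \<le> 0)"
      proof (cases "j \<in> S")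
        case False
        hence "y$j = 0" "v$j = 0" using ynS j S by auto
        thus ?thesis using zb j by auto
      next
        case True
        define q where "q = (r j - rmin) / (rmax - rmin)"
        have q: "0 \<le> q" "q \<le> 1" using rle[OF True] lt by (auto simp: q_def field_simps)
        have yj: "y$j = rat_of_int (v$j) * q" using yS[OF True] by (simp add: q_def)
        show ?thesis
        proof (cases "v$j > 0")
          case True
          have "0 \<le> y$j" "y$j \<le> rat_of_int (v$j)" using yj q True
            by (auto simp: mult_le_cancel_left1)
          hence "0 \<le> \<lfloor>y$j\<rfloor>" "\<lceil>y$j\<rceil> \<le> v$j" by (auto simp: le_floor_iff ceiling_le_iff)
          moreover have "\<lfloor>y$j\<rfloor> \<le> z$j" "z$j \<le> \<lceil>y$j\<rceil>" using zb j by auto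
          ultimately show ?thesis by linarith
        next
          case False
          hence vn: "v$j \<le> 0" by simp
          have "y$j \<le> 0" "rat_of_int (v$j) \<le> y$j" using yj q vn
            by (auto simp: mult_nonpos_nonneg mult_le_cancel_left1 mult_le_cancel_left2)
          hence "v$j \<le> \<lfloor>y$j\<rfloor>" "\<lceil>y$j\<rceil> \<le> 0" by (auto simp: le_floor_iff ceiling_le_iff)
          moreover have "\<lfloor>y$j\<rfloor> \<le> z$j" "z$j \<le> \<lceil>y$j\<rceil>" using zb j by auto
          ultimately show ?thesis by linarith
        qed
      qed
    qed
    have j0m: "j0 < m" "v$j0 \<noteq> 0" using j0 S by auto
    have j1m: "j1 < m" "v$j1 \<noteq> 0" using j1 S by auto
    have "y$j0 = 0" using yS[OF j0(1)] j0(2) by simp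
    hence zj0: "z$j0 = 0" using zb j0m by (metis ceiling_zero floor_zero order_antisym)
    have "y$j1 = rat_of_int (v$j1)" using yS[OF j1(1)] j1(2) lt by simp
    hence zj1: "z$j1 = v$j1" using zb j1m by (metis ceiling_of_int floor_of_int order_antisym)
    have "z \<in> L" using zc Az Lc by simp
    moreover have "z \<noteq> 0\<^sub>v m" using zj1 j1m by auto
    moreover have "v - z \<noteq> 0\<^sub>v m"
    proof
      assume "v - z = 0\<^sub>v m"
      hence "(v - z) $ j0 = 0" using j0m by simp
      thus False using j0m zj0 vc zc by simp
    qed
    ultimately show False using two btw by blast
  qed
  show ?thesis unfolding is_circuit_def using assms(3) gcd nosub by (simp add: L_def)
qed

end
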